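(* Let $\mathbb{K}$ be an algebraically closed field of characteristic $0$, let $p\in\mathbb{K}[x,y]\setminus(\mathbb{K}[x]\cup\mathbb{K}[y])$ be irreducible with $\mathrm{F}(p)\cong\mathbb{K}$, and let $r\in\mathbb{K}[x,y]_p\setminus\langle p\rangle$. Assume that the orbit $\mathcal{O}$ of a pole of $r$ on the curve $C$ associated with $p$ is infinite. Then there is an infinite path in the graph of $\mathcal{O}$ that contains no cycle (its vertices are pairwise distinct), starts at some pole of $r$, and contains no other pole of $r$.
   Context: $\mathbb{K}[x,y]_p$ is the set of $h\in\mathbb{K}(x,y)$ whose reduced denominator is not divisible by $p$; $\langle p\rangle=\{qp:q\in\mathbb{K}[x,y]_p\}$; $\mathrm{F}(p)=\{(f,g)\in\mathbb{K}(x)\times\mathbb{K}(y):f-g\in\langle p\rangle\}$, a field under componentwise operations; $\mathrm{F}(p)\cong\mathbb{K}$ means it consists only of pairs of equal constants. $C\subset\mathbb{P}^1(\mathbb{K})\times\mathbb{P}^1(\mathbb{K})$ is the zero set of the bi-homogenization $x_0^{\deg_x p}y_0^{\deg_y p}p(x_1/x_0,y_1/y_0)$. Orbits are the classes of the smallest equivalence relation on $C$ with $(a,b)\sim(c,d)$ whenever $a=c$ or $b=d$. The graph of an orbit has the elements of the orbit as vertices, two distinct vertices forming an edge when they share a coordinate; a path is a sequence of vertices with consecutive ones adjacent. A point $(\infty,\infty)\in C$ is a pole of $r$ if there is a Puiseux series $\varphi\in\mathbb{K}\{\{x^{-1}\}\}$ with $p(x,\varphi)=0$, $\deg\varphi>0$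 and $\deg r(x,\varphi)>0$ (degree = largest exponent of $x$); a general point $(s_1,s_2)\in C$ is a pole of $r$ if, for a pair $T$ of Möbius transformations sending $(s_1,s_2)$ to $(\infty,\infty)$, $(\infty,\infty)$ is a pole of $r\circ T^{-1}$ on the curve of the numerator of $p\circ T^{-1}$. *)

theory Defs
  imports "HOL-Computational_Algebra.Polynomial_Factorial"
          "HOL-Computational_Algebra.Fraction_Field"
          "HOL-Computational_Algebra.Formal_Laurent_Series"
begin

text \<open>Bivariate polynomials K[x,y] are represented as 'a poly poly: the outer
  variable is y, the coefficients are polynomials in x. So coeff (coeff p j) i
  is the coefficient of x^i y^j. K(x,y) is the fraction field 'a poly poly fract,
  K(x) and K(y) are 'a poly fract (embedded into K(x,y) as below).\<close>

definition ypoly :: "'a::zero poly \<Rightarrow> 'a poly poly" where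
  "ypoly q = map_poly (\<lambda>c. [:c:]) q"

definition degx :: "'a::zero poly poly \<Rightarrow> nat" where
  "degx p = Max ((\<lambda>j. degree (coeff p j)) ` {..degree p})"

definition degy :: "'a::zero poly poly \<Rightarrow> nat" where
  "degy p = degree p"

definition loc_ring :: "'a::field poly poly \<Rightarrow> 'a poly poly fract set" where
  "loc_ring p = {h. \<exists>a b. b \<noteq> 0 \<and> \<not> p dvd b \<and> h = Fract a b}"

definition loc_ideal :: "'a::field poly poly \<Rightarrow> 'a poly poly fract set" where
  "loc_ideal p = {Fract p 1 * h | h. h \<in> loc_ring p}"

definition Fp :: "'a::field poly poly \<Rightarrow> ('a poly fract \<times> 'a poly fract) set" where
  "Fp p = {(f, g). \<exists>a b c d. b \<noteq> 0 \<and> d \<noteq> 0 \<and> f = Fract a b \<and> g = Fract c d \<and>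
              Fract [:a:] [:b:] - Fract (ypoly c) (ypoly d) \<in> loc_ideal p}"

text \<open>F(p) is isomorphic to K: it consists only of pairs of equal constants.\<close>
definition Fp_trivial :: "'a::field poly poly \<Rightarrow> bool" where
  "Fp_trivial p \<longleftrightarrow> Fp p \<subseteq> {(Fract [:k:] 1, Fract [:k:] 1) | k. True}"

text \<open>Points of P^1(K): None is infinity, Some a is the affine point a.\<close>
type_synonym 'a pt = "'a option \<times> 'a option"

definition hcoords :: "'a::{zero,one} option \<Rightarrow> 'a \<times> 'a" where
  "hcoords s = (case s of None \<Rightarrow> (0, 1) | Some a \<Rightarrow> (1, a))"

text \<open>Bi-homogenization x0^dx y0^dy p(x1/x0, y1/y0) evaluated at homogeneous
  coordinates of a point of P^1 x P^1.\<close>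
definition bihom_eval :: "'a::field poly poly \<Rightarrow> 'a pt \<Rightarrow> 'a" where
  "bihom_eval p P = (case (hcoords (fst P), hcoords (snd P)) of ((x0, x1), (y0, y1)) \<Rightarrow>
     (\<Sum>i\<le>degx p. \<Sum>j\<le>degy p. coeff (coeff p j) i * x1 ^ i * x0 ^ (degx p - i)
                                   * y1 ^ j * y0 ^ (degy p - j)))"

definition curve :: "'a::field poly poly \<Rightarrow> 'a pt set" where
  "curve p = {P. bihom_eval p P = 0}"

definition orbit_step :: "'a::field poly poly \<Rightarrow> ('a pt \<times> 'a pt) set" where
  "orbit_step p = {(P, Q). P \<in> curve p \<and> Q \<in> curve p \<and> (fst P = fst Q \<or> snd P = snd Q)}"

definition orbit :: "'a::field poly poly \<Rightarrow> 'a pt \<Rightarrow> 'a pt set" where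
  "orbit p P = {Q. (P, Q) \<in> (orbit_step p)\<^sup>*}"

definition adjacent :: "'a pt \<Rightarrow> 'a pt \<Rightarrow> bool" where
  "adjacent P Q \<longleftrightarrow> P \<noteq> Q \<and> (fst P = fst Q \<or> snd P = snd Q)"

text \<open>Puiseux series in x^(-1): a Puiseux series of ramification n is a formal
  Laurent series phi in t with x = t^(-n), i.e. t = x^(-1/n).  Its degree
  (largest exponent of x) is  - fls_subdegree phi / n, so it is positive iff
  phi is nonzero with negative subdegree.\<close>
definition puiseux_x :: "nat \<Rightarrow> 'a::field fls" where
  "puiseux_x n = fls_X_intpow (- int n)"

definition pos_deg :: "'a::field fls \<Rightarrow> bool" where
  "pos_deg v \<longleftrightarrow> v \<noteq> 0 \<and> fls_subdegree v < 0"

definition eval2 :: "'a::field poly poly \<Rightarrow> 'a fls \<Rightarrow> 'a fls \<Rightarrow> 'a fls" where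
  "eval2 q X Y = poly (map_poly (\<lambda>c. poly (map_poly fls_const c) X) q) Y"

text \<open>Inverse T^{-1} of the Moebius transformation T sending s to infinity:
  identity if s = infinity, and x \<mapsto> s + 1/x (so T(x) = 1/(x - s)) otherwise.\<close>
definition moebius_inv :: "'a::field option \<Rightarrow> 'a fls \<Rightarrow> 'a fls" where
  "moebius_inv s X = (case s of None \<Rightarrow> X | Some c \<Rightarrow> fls_const c + inverse X)"

text \<open>(s1,s2) in C is a pole of r: there is a Puiseux series phi of positive
  degree with (numerator of p o T^{-1})(x, phi) = 0 and deg (r o T^{-1})(x, phi) > 0.
  Since x and phi are nonzero, the numerator vanishes iff p(T^{-1} x, T^{-1} phi) = 0.
  r is given by any representation a/b with p not dividing b.\<close>
definition is_pole :: "'a::field poly poly \<Rightarrow> 'a poly poly fract \<Rightarrow> 'a pt \<Rightarrow> bool" where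
  "is_pole p r P \<longleftrightarrow> P \<in> curve p \<and>
     (\<exists>n a b (phi :: 'a fls). n > 0 \<and> r = Fract a b \<and> b \<noteq> 0 \<and> \<not> p dvd b \<and> pos_deg phi \<and>
        (let X = moebius_inv (fst P) (puiseux_x n); Y = moebius_inv (snd P) phi in
           eval2 p X Y = 0 \<and> pos_deg (eval2 a X Y / eval2 b X Y)))"

end

theory Submission
  imports Defs
begin

lemma koenig:
  fixes E :: "('v \<times> 'v) set"
  assumes fin: "\<And>x. finite {y. (x,y) \<in> E}"
    and inf: "infinite {y. (x0,y) \<in> E\<^sup>*}"
  shows "\<exists>v. v 0 = x0 \<and> inj v \<and> (\<forall>k. (v k, v (Suc k)) \<in> E)"
proof -
  define d where "d y = (LEAST n. (x0,y) \<in> E ^^ n)" for y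
  define Ch where "Ch = {(a,b). (a,b) \<in> E \<and> d b = Suc (d a)}"
  define desc where "desc a = {b. (a,b) \<in> Ch\<^sup>*}" for a
  have dle: "d y \<le> n" if "(x0,y) \<in> E ^^ n" for y n
    unfolding d_def using that by (rule Least_le)
  have dI: "(x0,y) \<in> E ^^ d y" if "(x0,y) \<in> E\<^sup>*" for y
  proof -
    from that obtain n where "(x0,y) \<in> E ^^ n" using rtrancl_power by blast
    thus ?thesis unfolding d_def by (rule LeastI)
  qed
  have claim1: "(x0,y) \<in> Ch\<^sup>*" if "(x0,y) \<in> E ^^ n" "d y = n" for n y
    using that
  proof (induction n arbitrary: y)
    case 0
    then show ?case by simp
  next
    case (Suc m)
    from Suc.prems(1) obtain z where z: "(x0,z) \<in> E ^^ m" "(z,y) \<in> E"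
      by (rule relpow_Suc_E)
    have "d z \<le> m" using dle z(1) .
    have zs: "(x0,z) \<in> E\<^sup>*" using z(1) relpow_imp_rtrancl by blast
    have "(x0,y) \<in> E ^^ Suc (d z)" using dI[OF zs] z(2) by auto
    hence "d y \<le> Suc (d z)" by (rule dle)
    hence dz: "d z = m" using \<open>d z \<le> m\<close> Suc.prems(2) by simp
    have "(x0,z) \<in> Ch\<^sup>*" using Suc.IH[OF z(1) dz] .
    moreover have "(z,y) \<in> Ch" unfolding Ch_def using z(2) dz Suc.prems(2) by simp
    ultimately show ?case by (rule rtrancl_into_rtrancl)
  qed
  have "{y. (x0,y) \<in> E\<^sup>*} \<subseteq> desc x0"
    using claim1 dI unfolding desc_def by blast
  hence inf0: "infinite (desc x0)" using inf finite_subset by blast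
  have step: "\<exists>b. (a,b) \<in> Ch \<and> infinite (desc b)" if "infinite (desc a)" for a
  proof (rule ccontr)
    assume "\<not> ?thesis"
    hence fb: "finite (desc b)" if "(a,b) \<in> Ch" for b using that by blast
    have "desc a \<subseteq> insert a (\<Union>b\<in>{b. (a,b) \<in> Ch}. desc b)"
    proof
      fix c assume "c \<in> desc a"
      hence "(a,c) \<in> Ch\<^sup>*" unfolding desc_def by simp
      thus "c \<in> insert a (\<Union>b\<in>{b. (a,b) \<in> Ch}. desc b)"
      proof (cases rule: converse_rtranclE)
        case base thus ?thesis by simp
      next
        case (step b)
        thus ?thesis unfolding desc_def by blast
      qed
    qed
    moreover have "finite (\<Union>b\<in>{b. (a,b) \<in> Ch}. desc b)"
    proof (rule finite_UN_I)
      show "finite {b. (a,b) \<in> Ch}"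
        by (rule finite_subset[OF _ fin[of a]]) (auto simp: Ch_def)
    qed (use fb in auto)
    ultimately show False using that finite_subset by blast
  qed
  define v where "v = rec_nat x0 (\<lambda>_ a. SOME b. (a,b) \<in> Ch \<and> infinite (desc b))"
  have v0: "v 0 = x0" unfolding v_def by simp
  have vS: "v (Suc k) = (SOME b. (v k,b) \<in> Ch \<and> infinite (desc b))" for k
    unfolding v_def by simp
  have vinf: "infinite (desc (v k))" for k
  proof (induction k)
    case 0 thus ?case using inf0 v0 by simp
  next
    case (Suc k)
    from someI_ex[OF step[OF Suc]] show ?case unfolding vS by blast
  qed
  have vCh: "(v k, v (Suc k)) \<in> Ch" for k
    using someI_ex[OF step[OF vinf[of k]]] unfolding vS by blast
  have d0: "d x0 = 0" using dle[of x0 0] by simp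
  have dv: "d (v k) = k" for k
  proof (induction k)
    case 0 thus ?case using v0 d0 by simp
  next
    case (Suc k) thus ?case using vCh[of k] unfolding Ch_def by simp
  qed
  have "inj v"
  proof (rule injI)
    fix a b assume "v a = v b"
    hence "d (v a) = d (v b)" by simp
    thus "a = b" using dv by simp
  qed
  moreover have "(v k, v (Suc k)) \<in> E" for k using vCh[of k] unfolding Ch_def by simp
  ultimately show ?thesis using v0 by blast
qed

lemma map_poly_add_hom:
  assumes "h 0 = 0" "\<And>a b. h (a + b) = h a + h b"
  shows "map_poly h (p + q) = map_poly h p + map_poly h q"
  by (intro poly_eqI) (simp add: coeff_map_poly assms)

lemma poly_map_poly_mult_hom:
  fixes h :: "'a::comm_ring_1 \<Rightarrow> 'b::comm_ring_1"
  assumes h0: "h 0 = 0" and hadd: "\<And>a b. h (a + b) = h a + h b"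
    and hmult: "\<And>a b. h (a * b) = h a * h b"
  shows "poly (map_poly h (p * q)) y = poly (map_poly h p) y * poly (map_poly h q) y"
proof (induction p)
  case 0 thus ?case by (simp add: h0)
next
  case (pCons a p)
  have "poly (map_poly h (pCons a p * q)) y
      = poly (map_poly h (smult a q)) y + poly (map_poly h (pCons 0 (p * q))) y"
    by (simp add: map_poly_add_hom[OF h0 hadd])
  also have "\<dots> = h a * poly (map_poly h q) y + y * poly (map_poly h (p * q)) y"
    by (simp add: map_poly_smult[OF h0 hmult] map_poly_pCons[of h, OF h0] h0)
  also have "\<dots> = poly (map_poly h (pCons a p)) y * poly (map_poly h q) y"
    using pCons.IH by (simp add: map_poly_pCons[of h, OF h0] algebra_simps)
  finally show ?case .
qed

lemma poly_map_poly_add_hom: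
  assumes h0: "h 0 = 0" and hadd: "\<And>a b. h (a + b) = h a + h b"
  shows "poly (map_poly h (p + q)) y = poly (map_poly h p) y + poly (map_poly h q) y"
  by (simp add: map_poly_add_hom[OF h0 hadd])

lemma eval2_mult:
  fixes a b :: "'a::field poly poly"
  shows "eval2 (a * b) X Y = eval2 a X Y * eval2 b X Y"
proof -
  define h :: "'a poly \<Rightarrow> 'a fls" where "h c = poly (map_poly fls_const c) X" for c
  have h0: "h 0 = 0" by (simp add: h_def)
  have fa: "fls_const (x + y) = fls_const x + fls_const y" for x y :: 'a
    by (simp add: fls_plus_const)
  have hadd: "h (c + d) = h c + h d" for c d
    unfolding h_def by (rule poly_map_poly_add_hom[of fls_const c d X]) (simp_all add: fa)
  have hmult: "h (c * d) = h c * h d" for c d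
    unfolding h_def by (rule poly_map_poly_mult_hom[of fls_const c d X]) (simp_all add: fa)
  show ?thesis unfolding eval2_def h_def[symmetric]
    by (rule poly_map_poly_mult_hom[of h a b Y, OF h0 hadd hmult])
qed

definition ev :: "'a::comm_ring_1 poly poly \<Rightarrow> 'a \<Rightarrow> 'a \<Rightarrow> 'a" where
  "ev q c a = poly (poly q [:a:]) c"

lemma ev_map_poly: "ev q c a = poly (map_poly (\<lambda>r. poly r c) q) a"
  unfolding ev_def
  by (induction q) (simp_all add: map_poly_pCons)

lemma poly_altdef_le:
  fixes q :: "'a::comm_semiring_1 poly"
  assumes "degree q \<le> N"
  shows "poly q x = (\<Sum>i\<le>N. coeff q i * x ^ i)"
proof -
  have "poly q x = (\<Sum>i\<le>degree q. coeff q i * x ^ i)" by (rule poly_altdef)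
  also have "\<dots> = (\<Sum>i\<le>N. coeff q i * x ^ i)"
    by (rule sum.mono_neutral_left) (use assms in \<open>auto simp: coeff_eq_0 not_le\<close>)
  finally show ?thesis .
qed

lemma degree_map_poly_le:
  assumes "f 0 = 0"
  shows "degree (map_poly f p) \<le> degree p"
  by (rule degree_le) (simp add: coeff_map_poly assms coeff_eq_0)

lemma degree_coeff_le_degx: "degree (coeff p j) \<le> degx p"
proof (cases "j \<le> degree p")
  case True
  thus ?thesis unfolding degx_def by (intro Max_ge) auto
next
  case False
  thus ?thesis by (simp add: coeff_eq_0)
qed

lemma bihom_Some_Some:
  fixes p :: "'a::field poly poly"
  shows "bihom_eval p (Some c, Some a) = ev p c a"
proof -
  have "ev p c a = (\<Sum>j\<le>degree p. coeff (map_poly (\<lambda>r. poly r c) p) j * a ^ j)"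
    unfolding ev_map_poly by (rule poly_altdef_le) (simp add: degree_map_poly_le)
  also have "\<dots> = (\<Sum>j\<le>degree p. (\<Sum>i\<le>degx p. coeff (coeff p j) i * c ^ i) * a ^ j)"
    by (intro sum.cong refl) (simp add: coeff_map_poly poly_altdef_le[OF degree_coeff_le_degx])
  also have "\<dots> = (\<Sum>i\<le>degx p. \<Sum>j\<le>degree p. coeff (coeff p j) i * c ^ i * a ^ j)"
    by (subst sum.swap) (simp add: sum_distrib_right)
  finally show ?thesis
    by (simp add: bihom_eval_def hcoords_def degy_def)
qed

lemma bihom_None_Some:
  fixes p :: "'a::field poly poly"
  shows "bihom_eval p (None, Some a) = poly (map_poly (\<lambda>r. coeff r (degx p)) p) a"
proof -
  have "bihom_eval p (None, Some a) =
     (\<Sum>i\<le>degx p. \<Sum>j\<le>degree p. (if i = degx p then coeff (coeff p j) i * a ^ j else 0))"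
    unfolding bihom_eval_def hcoords_def degy_def
    by simp (intro sum.cong refl, auto simp: power_0_left)
  also have "\<dots> = (\<Sum>j\<le>degree p. coeff (coeff p j) (degx p) * a ^ j)"
    by (subst sum.swap) simp
  also have "\<dots> = poly (map_poly (\<lambda>r. coeff r (degx p)) p) a"
    by (subst poly_altdef_le[of _ "degree p"]) (simp_all add: degree_map_poly_le coeff_map_poly)
  finally show ?thesis .
qed

lemma bihom_Some_None:
  fixes p :: "'a::field poly poly"
  shows "bihom_eval p (Some c, None) = poly (lead_coeff p) c"
proof -
  have dl: "(\<Sum>j\<le>degree p. g j * (if degree p = j then 1 else 0)) = g (degree p)" for g :: "nat \<Rightarrow> 'a"
    by (subst sum.cong[OF refl, of _ _ "\<lambda>j. if degree p = j then g j else 0"]) auto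
  have "bihom_eval p (Some c, None) = (\<Sum>i\<le>degx p. coeff (lead_coeff p) i * c ^ i)"
    unfolding bihom_eval_def hcoords_def degy_def
    by (simp add: power_0_left dl)
  also have "\<dots> = poly (lead_coeff p) c"
    by (rule poly_altdef_le[symmetric, OF degree_coeff_le_degx])
  finally show ?thesis .
qed

lemma q1_nonzero:
  fixes p :: "'a::field poly poly"
  assumes "\<exists>j. 0 < degree (coeff p j)"
  shows "map_poly (\<lambda>r. coeff r (degx p)) p \<noteq> 0"
proof -
  have "degx p \<in> (\<lambda>j. degree (coeff p j)) ` {..degree p}"
    unfolding degx_def by (rule Max_in) auto
  then obtain j0 where j0: "degree (coeff p j0) = degx p" by auto
  from assms obtain j where "0 < degree (coeff p j)" by blast
  hence "0 < degx p" using degree_coeff_le_degx[of p j] by linarith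
  hence "coeff p j0 \<noteq> 0" using j0 by auto
  hence "coeff (coeff p j0) (degx p) \<noteq> 0" using j0 by (metis leading_coeff_0_iff)
  hence "coeff (map_poly (\<lambda>r. coeff r (degx p)) p) j0 \<noteq> 0" by (simp add: coeff_map_poly)
  thus ?thesis by auto
qed

lemma q2_nonzero:
  fixes p :: "'a::field poly poly"
  assumes irr: "irreducible p" and deg: "degree p > 0"
  shows "map_poly (\<lambda>r. poly r c) p \<noteq> 0"
proof
  assume H: "map_poly (\<lambda>r. poly r c) p = 0"
  define d where "d = [:-c, 1:]"
  have dv: "d dvd coeff p j" for j
  proof -
    have "coeff (map_poly (\<lambda>r. poly r c) p) j = 0" using H by simp
    hence "poly (coeff p j) c = 0" by (simp add: coeff_map_poly)
    thus ?thesis unfolding d_def by (simp add: poly_eq_0_iff_dvd)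
  qed
  define p' where "p' = map_poly (\<lambda>r. r div d) p"
  have "p = [:d:] * p'"
    by (intro poly_eqI) (simp add: p'_def coeff_map_poly dv)
  from irreducibleD[OF irr this] have "is_unit [:d:] \<or> is_unit p'" .
  moreover have "\<not> is_unit [:d:]"
    by (simp add: is_unit_const_poly_iff d_def is_unit_poly_iff)
  moreover have "\<not> is_unit p'"
  proof
    assume "is_unit p'"
    hence "degree p' = 0" by (simp add: is_unit_poly_iff) (metis degree_pCons_0)
    moreover have "degree p \<le> degree p'" using \<open>p = [:d:] * p'\<close> degree_smult_le[of d p'] by simp
    ultimately have "degree p = 0" by simp
    thus False using deg by simp
  qed
  ultimately show False by blast
qed

lemma poly_const_nonzero:
  fixes p :: "'a::field poly poly"
  assumes irr: "irreducible p" and nk: "\<exists>j. 0 < degree (coeff p j)"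
  shows "poly p [:a:] \<noteq> 0"
proof
  assume "poly p [:a:] = 0"
  hence "[:-[:a:], 1:] dvd p" by (simp add: poly_eq_0_iff_dvd)
  then obtain k where k: "p = [:-[:a:], 1:] * k" by (elim dvdE)
  from irreducibleD[OF irr k] have "is_unit [:-[:a:], 1:] \<or> is_unit k" .
  moreover have "\<not> is_unit [:-[:a:], 1:]" by (simp add: is_unit_poly_iff)
  ultimately have "is_unit k" by blast
  then obtain u where u: "k = [:u:]" "is_unit u" by (auto simp: is_unit_poly_iff)
  hence "degree u = 0" by (simp add: is_unit_poly_iff) (metis degree_pCons_0)
  have pe: "p = [:- smult a u, u:]" using k u by simp
  have "degree (coeff p j) = 0" for j
  proof (cases j)
    case 0
    thus ?thesis using pe \<open>degree u = 0\<close> degree_smult_le[of a u] by simp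
  next
    case (Suc i)
    thus ?thesis using pe \<open>degree u = 0\<close> by (cases i) simp_all
  qed
  thus False using nk by simp
qed

lemma fin_fix_fst:
  fixes p :: "'a::field poly poly"
  assumes irr: "irreducible p" and deg: "degree p > 0" and nk: "\<exists>j. 0 < degree (coeff p j)"
  shows "finite {y. bihom_eval p (s, y) = 0}"
proof (cases s)
  case None
  have "{y. bihom_eval p (s, y) = 0} \<subseteq>
          insert None (Some ` {a. poly (map_poly (\<lambda>r. coeff r (degx p)) p) a = 0})"
    using None by (intro subsetI, case_tac x) (auto simp: bihom_None_Some)
  thus ?thesis using poly_roots_finite[OF q1_nonzero[OF nk]] finite_subset by blast
next
  case (Some c)
  have "{y. bihom_eval p (s, y) = 0} \<subseteq>
          insert None (Some ` {a. poly (map_poly (\<lambda>r. poly r c) p) a = 0})"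
    using Some by (intro subsetI, case_tac x) (auto simp: bihom_Some_Some ev_map_poly)
  thus ?thesis using poly_roots_finite[OF q2_nonzero[OF irr deg]] finite_subset by blast
qed

lemma fin_fix_snd:
  fixes p :: "'a::field poly poly"
  assumes irr: "irreducible p" and nk: "\<exists>j. 0 < degree (coeff p j)"
  shows "finite {x. bihom_eval p (x, s) = 0}"
proof (cases s)
  case None
  have "p \<noteq> 0" using irr by auto
  hence lc: "lead_coeff p \<noteq> 0" by simp
  have "{x. bihom_eval p (x, s) = 0} \<subseteq> insert None (Some ` {c. poly (lead_coeff p) c = 0})"
    using None by (intro subsetI, case_tac x) (auto simp: bihom_Some_None)
  thus ?thesis using poly_roots_finite[OF lc] finite_subset by blast
next
  case (Some a)
  have "{x. bihom_eval p (x, s) = 0} \<subseteq> insert None (Some ` {c. poly (poly p [:a:]) c = 0})"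
    using Some by (intro subsetI, case_tac x) (auto simp: bihom_Some_Some ev_def)
  thus ?thesis using poly_roots_finite[OF poly_const_nonzero[OF irr nk]] finite_subset by blast
qed

lemma evc_mult:
  fixes G H :: "'a::field poly poly"
  shows "map_poly (\<lambda>r. poly r c) (G * H) = map_poly (\<lambda>r. poly r c) G * map_poly (\<lambda>r. poly r c) H"
  by (intro poly_eqI) (simp add: coeff_map_poly coeff_mult poly_sum)

lemma lin_dvd_iff:
  fixes G :: "'a::field poly poly"
  shows "[:[:-c, 1:]:] dvd G \<longleftrightarrow> map_poly (\<lambda>r. poly r c) G = 0"
proof
  assume "[:[:-c, 1:]:] dvd G"
  then obtain G' where "G = [:[:-c, 1:]:] * G'" by (elim dvdE)
  moreover have "map_poly (\<lambda>r. poly r c) [:[:-c, 1:]:] = 0" by (simp add: map_poly_pCons)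
  ultimately show "map_poly (\<lambda>r. poly r c) G = 0" by (simp only: evc_mult) simp
next
  assume H: "map_poly (\<lambda>r. poly r c) G = 0"
  define d where "d = [:-c, 1:]"
  have dv: "d dvd coeff G j" for j
  proof -
    have "coeff (map_poly (\<lambda>r. poly r c) G) j = 0" using H by simp
    hence "poly (coeff G j) c = 0" by (simp add: coeff_map_poly)
    thus ?thesis unfolding d_def by (simp add: poly_eq_0_iff_dvd)
  qed
  have "G = [:d:] * map_poly (\<lambda>r. r div d) G"
    by (intro poly_eqI) (simp add: coeff_map_poly dv)
  thus "[:[:-c, 1:]:] dvd G" unfolding d_def by (metis dvd_triv_left)
qed

lemma lin_prime:
  fixes G H :: "'a::field poly poly"
  assumes "[:[:-c, 1:]:] dvd G * H"
  shows "[:[:-c, 1:]:] dvd G \<or> [:[:-c, 1:]:] dvd H"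
  using assms by (simp add: lin_dvd_iff evc_mult)

lemma split_root:
  fixes d :: "'a::field poly"
  assumes alg: "\<And>q :: 'a poly. degree q > 0 \<Longrightarrow> \<exists>z. poly q z = 0"
    and deg: "degree d > 0"
  shows "\<exists>c d'. d = [:-c, 1:] * d' \<and> degree d' < degree d \<and> d' \<noteq> 0"
proof -
  obtain c where "poly d c = 0" using alg deg by blast
  hence "[:-c, 1:] dvd d" by (simp add: poly_eq_0_iff_dvd)
  then obtain d' where d': "d = [:-c, 1:] * d'" by (elim dvdE)
  have "d \<noteq> 0" using deg by auto
  hence "d' \<noteq> 0" using d' by auto
  have "degree ([:-c, 1:] * d') = degree [:-c, 1:] + degree d'"
    by (rule degree_mult_eq) (use \<open>d' \<noteq> 0\<close> in auto)
  hence "degree d = 1 + degree d'" using d' by simp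
  thus ?thesis using d' \<open>d' \<noteq> 0\<close> by auto
qed

lemma one_const_poly: "[:1:] = (1::'a::comm_semiring_1 poly)"
  by (simp add: one_pCons)

lemma nz_lin: "[:[:-c, 1:]:] \<noteq> (0::'a::field poly poly)"
  by simp

lemma gauss_split:
  fixes p G H :: "'a::field poly poly"
  assumes alg: "\<And>q :: 'a poly. degree q > 0 \<Longrightarrow> \<exists>z. poly q z = 0"
  shows "[:d:] * p = G * H \<Longrightarrow> d \<noteq> 0 \<Longrightarrow>
         \<exists>G' H'. p = G' * H' \<and> degree G' = degree G \<and> degree H' = degree H"
proof (induction "degree d" arbitrary: d G H rule: less_induct)
  case less
  show ?case
  proof (cases "degree d = 0")
    case True
    then obtain d0 where d0: "d = [:d0:]" by (metis degree_eq_zeroE)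
    hence "d0 \<noteq> 0" using less.prems by auto
    define G' where "G' = smult [:inverse d0:] G"
    have "G' * H = smult [:inverse d0:] ([:d:] * p)" using less.prems(1) by (simp add: G'_def)
    also have "\<dots> = p" using d0 \<open>d0 \<noteq> 0\<close> by (simp add: one_const_poly)
    finally have "p = G' * H" by simp
    moreover have "degree G' = degree G" using \<open>d0 \<noteq> 0\<close> by (simp add: G'_def)
    ultimately show ?thesis by blast
  next
    case False
    then obtain c d' where cd: "d = [:-c, 1:] * d'" "degree d' < degree d" "d' \<noteq> 0"
      using split_root[OF alg] by blast
    have eq: "[:[:-c, 1:]:] * ([:d':] * p) = G * H"
      using less.prems(1) cd(1) by (simp add: mult.assoc)
    hence "[:[:-c, 1:]:] dvd G * H" by (metis dvd_triv_left)
    hence "[:[:-c, 1:]:] dvd G \<or> [:[:-c, 1:]:] dvd H" by (rule lin_prime)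
    thus ?thesis
    proof
      assume "[:[:-c, 1:]:] dvd G"
      then obtain G1 where G1: "G = [:[:-c, 1:]:] * G1" by (elim dvdE)
      have "[:[:-c, 1:]:] * ([:d':] * p) = [:[:-c, 1:]:] * (G1 * H)"
        using eq G1 by (simp add: mult.assoc)
      hence "[:d':] * p = G1 * H" by (rule mult_left_cancel[OF nz_lin, THEN iffD1])
      from less.hyps[OF cd(2) this cd(3)] obtain G' H' where
        "p = G' * H'" "degree G' = degree G1" "degree H' = degree H" by blast
      moreover have "degree G = degree G1" using G1 by simp
      ultimately show ?thesis by auto
    next
      assume "[:[:-c, 1:]:] dvd H"
      then obtain H1 where H1: "H = [:[:-c, 1:]:] * H1" by (elim dvdE)
      have "[:[:-c, 1:]:] * ([:d':] * p) = [:[:-c, 1:]:] * (G * H1)"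
        using eq H1 by (simp add: algebra_simps)
      hence "[:d':] * p = G * H1" by (rule mult_left_cancel[OF nz_lin, THEN iffD1])
      from less.hyps[OF cd(2) this cd(3)] obtain G' H' where
        "p = G' * H'" "degree G' = degree G" "degree H' = degree H1" by blast
      moreover have "degree H = degree H1" using H1 by simp
      ultimately show ?thesis by auto
    qed
  qed
qed

lemma gauss_dvd:
  fixes p b K :: "'a::field poly poly"
  assumes alg: "\<And>q :: 'a poly. degree q > 0 \<Longrightarrow> \<exists>z. poly q z = 0"
    and irr: "irreducible p" and deg: "degree p > 0"
  shows "[:d:] * b = p * K \<Longrightarrow> d \<noteq> 0 \<Longrightarrow> p dvd b"
proof (induction "degree d" arbitrary: d K rule: less_induct)
  case less
  show ?case
  proof (cases "degree d = 0")
    case True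
    then obtain d0 where d0: "d = [:d0:]" by (metis degree_eq_zeroE)
    hence "d0 \<noteq> 0" using less.prems by auto
    have "b = smult [:inverse d0:] ([:d:] * b)" using d0 \<open>d0 \<noteq> 0\<close> by (simp add: one_const_poly)
    also have "\<dots> = p * smult [:inverse d0:] K" using less.prems(1) by simp
    finally show ?thesis by (metis dvd_triv_left)
  next
    case False
    then obtain c d' where cd: "d = [:-c, 1:] * d'" "degree d' < degree d" "d' \<noteq> 0"
      using split_root[OF alg] by blast
    have eq: "[:[:-c, 1:]:] * ([:d':] * b) = p * K"
      using less.prems(1) cd(1) by (simp add: mult.assoc)
    hence "[:[:-c, 1:]:] dvd p * K" by (metis dvd_triv_left)
    hence "[:[:-c, 1:]:] dvd p \<or> [:[:-c, 1:]:] dvd K" by (rule lin_prime)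
    moreover have "\<not> [:[:-c, 1:]:] dvd p"
      using q2_nonzero[OF irr deg, of c] by (simp add: lin_dvd_iff)
    ultimately have "[:[:-c, 1:]:] dvd K" by blast
    then obtain K1 where K1: "K = [:[:-c, 1:]:] * K1" by (elim dvdE)
    have "[:[:-c, 1:]:] * ([:d':] * b) = [:[:-c, 1:]:] * (p * K1)"
      using eq K1 by (simp add: algebra_simps)
    hence "[:d':] * b = p * K1" by (rule mult_left_cancel[OF nz_lin, THEN iffD1])
    from less.hyps[OF cd(2) this cd(3)] show ?thesis .
  qed
qed

lemma clear_denoms:
  fixes u :: "'a::idom fract poly"
  shows "\<exists>e U. e \<noteq> 0 \<and> smult (to_fract e) u = fract_poly U"
proof (induction u)
  case 0
  show ?case by (rule exI[of _ 1], rule exI[of _ 0]) simp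
next
  case (pCons a u)
  then obtain e U where eU: "e \<noteq> 0" "smult (to_fract e) u = fract_poly U" by blast
  obtain n m where a: "a = Fract n m" "m \<noteq> 0" by (rule Fract_cases)
  have "to_fract (m * e) * a = to_fract (n * e)"
    using a by (simp add: Fract_conv_to_fract)
  moreover have "smult (to_fract (m * e)) u = fract_poly (smult m U)"
  proof -
    have "smult (to_fract (m * e)) u = smult (to_fract m) (smult (to_fract e) u)"
      by (simp add: smult_smult)
    also have "\<dots> = fract_poly (smult m U)" using eU(2) by simp
    finally show ?thesis .
  qed
  ultimately have "smult (to_fract (m * e)) (pCons a u) = fract_poly (pCons (n * e) (smult m U))"
    by (simp add: map_poly_pCons del: to_fract_mult fract_poly_smult)
  thus ?case using eU(1) a(2) by (intro exI[of _ "m * e"]) auto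
qed

lemma fract_poly_const_mult: "fract_poly ([:c:] * X) = smult (to_fract c) (fract_poly X)"
  by simp

lemma degree_fract_poly: "degree (fract_poly (X :: 'a::idom poly)) = degree X"
  by (rule degree_map_poly) simp

lemma bezout_clear:
  fixes p b :: "'a::field poly poly"
  assumes alg: "\<And>q :: 'a poly. degree q > 0 \<Longrightarrow> \<exists>z. poly q z = 0"
    and irr: "irreducible p" and deg: "degree p > 0" and nd: "\<not> p dvd b"
  shows "\<exists>U V d. U * p + V * b = [:d:] \<and> d \<noteq> 0"
proof -
  define P where "P = fract_poly p"
  define B where "B = fract_poly b"
  define J where "J = {w. \<exists>u v. w = u * P + v * B}"
  have p0: "p \<noteq> 0" using irr by auto
  hence P0: "P \<noteq> 0" by (simp add: P_def)
  have PJ: "P \<in> J" unfolding J_def by (rule CollectI, rule exI[of _ 1], rule exI[of _ 0]) simp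
  have BJ: "B \<in> J" unfolding J_def by (rule CollectI, rule exI[of _ 0], rule exI[of _ 1]) simp
  have ex: "\<exists>n. \<exists>w\<in>J. w \<noteq> 0 \<and> degree w = n" using PJ P0 by blast
  define n where "n = (LEAST n. \<exists>w\<in>J. w \<noteq> 0 \<and> degree w = n)"
  obtain g where g: "g \<in> J" "g \<noteq> 0" "degree g = n"
    using LeastI_ex[OF ex] unfolding n_def by blast
  have minim: "n \<le> degree w" if "w \<in> J" "w \<noteq> 0" for w
    unfolding n_def using that by (intro Least_le) blast
  obtain ug vg where gdef: "g = ug * P + vg * B" using g(1) unfolding J_def by blast
  have Jdvd: "g dvd w" if wJ: "w \<in> J" for w
  proof -
    obtain uw vw where wdef: "w = uw * P + vw * B" using wJ unfolding J_def by blast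
    define q where "q = w div g"
    have "w mod g = w - q * g" using div_mult_mod_eq[of w g] unfolding q_def by (simp add: algebra_simps)
    also have "\<dots> = (uw - q * ug) * P + (vw - q * vg) * B"
      unfolding wdef gdef by (simp add: algebra_simps)
    finally have "w mod g \<in> J" unfolding J_def by blast
    hence "w mod g = 0"
      using minim[of "w mod g"] degree_mod_less'[OF g(2), of w] g(3) by fastforce
    thus ?thesis by (simp add: mod_eq_0_iff_dvd)
  qed
  show ?thesis
  proof (cases "degree g = 0")
    case True
    then obtain g0 where g0: "g = [:g0:]" by (metis degree_eq_zeroE)
    hence "g0 \<noteq> 0" using g(2) by auto
    define u1 where "u1 = smult (inverse g0) ug"
    define v1 where "v1 = smult (inverse g0) vg"
    have one: "u1 * P + v1 * B = 1"
    proof -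
      have "u1 * P + v1 * B = smult (inverse g0) g" unfolding u1_def v1_def gdef
        by (simp add: algebra_simps smult_add_right)
      also have "\<dots> = 1" using g0 \<open>g0 \<noteq> 0\<close> by (simp add: one_const_poly)
      finally show ?thesis .
    qed
    obtain e1 U1 where e1: "e1 \<noteq> 0" "smult (to_fract e1) u1 = fract_poly U1"
      using clear_denoms by blast
    obtain e2 V1 where e2: "e2 \<noteq> 0" "smult (to_fract e2) v1 = fract_poly V1"
      using clear_denoms by blast
    have "fract_poly (smult e2 U1 * p + smult e1 V1 * b)
        = smult (to_fract e2) (fract_poly U1) * P + smult (to_fract e1) (fract_poly V1) * B"
      by (simp add: P_def B_def)
    also have "\<dots> = smult (to_fract e1 * to_fract e2) (u1 * P + v1 * B)"
      unfolding e1(2)[symmetric] e2(2)[symmetric] by (simp add: algebra_simps smult_add_right)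
    also have "\<dots> = fract_poly [:e1 * e2:]" using one by (simp add: one_const_poly map_poly_pCons)
    finally have "smult e2 U1 * p + smult e1 V1 * b = [:e1 * e2:]"
      by (simp only: fract_poly_eq_iff)
    thus ?thesis using e1(1) e2(1) by (intro exI[of _ "smult e2 U1"] exI[of _ "smult e1 V1"] exI[of _ "e1 * e2"]) simp
  next
    case False
    have "g dvd P" using Jdvd PJ .
    then obtain h where h: "P = g * h" by (elim dvdE)
    obtain e1 G where e1: "e1 \<noteq> 0" "smult (to_fract e1) g = fract_poly G"
      using clear_denoms by blast
    obtain e2 H where e2: "e2 \<noteq> 0" "smult (to_fract e2) h = fract_poly H"
      using clear_denoms by blast
    have "fract_poly ([:e1 * e2:] * p) = smult (to_fract e1) g * smult (to_fract e2) h"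
      unfolding fract_poly_const_mult P_def[symmetric] h by (simp add: algebra_simps)
    also have "\<dots> = fract_poly (G * H)" using e1(2) e2(2) by simp
    finally have "[:e1 * e2:] * p = G * H" by (simp only: fract_poly_eq_iff)
    from gauss_split[OF alg this] e1(1) e2(1) obtain G' H' where
      GH: "p = G' * H'" "degree G' = degree G" "degree H' = degree H" by auto
    have dG: "degree G = degree g"
      using e1 degree_fract_poly[of G] by (metis degree_smult_eq to_fract_eq_0_iff)
    have dH: "degree H = degree h"
      using e2 degree_fract_poly[of H] by (metis degree_smult_eq to_fract_eq_0_iff)
    from irreducibleD[OF irr GH(1)] have "is_unit G' \<or> is_unit H'" .
    moreover have "\<not> is_unit G'"
    proof
      assume "is_unit G'"
      hence "degree G' = 0" by (auto simp: is_unit_poly_iff)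
      thus False using GH(2) dG False by simp
    qed
    ultimately have "is_unit H'" by blast
    hence "degree h = 0" using GH(3) dH by (auto simp: is_unit_poly_iff)
    then obtain h0 where h0: "h = [:h0:]" by (metis degree_eq_zeroE)
    hence "h0 \<noteq> 0" using P0 h by auto
    have "g dvd B" using Jdvd BJ .
    then obtain k where k: "B = g * k" by (elim dvdE)
    have gP: "g = smult (inverse h0) P" using h h0 \<open>h0 \<noteq> 0\<close> by (simp add: one_const_poly)
    define k1 where "k1 = smult (inverse h0) k"
    have Bk: "B = P * k1" unfolding k k1_def gP by (simp add: algebra_simps)
    obtain e3 K where e3: "e3 \<noteq> 0" "smult (to_fract e3) k1 = fract_poly K"
      using clear_denoms by blast
    have "fract_poly ([:e3:] * b) = P * smult (to_fract e3) k1"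
      unfolding fract_poly_const_mult B_def[symmetric] Bk by simp
    also have "\<dots> = fract_poly (p * K)" using e3(2) by (simp add: P_def)
    finally have "[:e3:] * b = p * K" by (simp only: fract_poly_eq_iff)
    from gauss_dvd[OF alg irr deg this e3(1)] nd show ?thesis by blast
  qed
qed

lemma ev_add: "ev (q1 + q2) c a = ev q1 c a + ev q2 c a"
  by (simp add: ev_def)
lemma ev_mult: "ev (q1 * q2) c a = ev q1 c a * ev q2 c a"
  by (simp add: ev_def)
lemma ev_const: "ev [:d:] c a = poly d c"
  by (simp add: ev_def)

lemma common_zeros_finite:
  fixes p b :: "'a::field poly poly"
  assumes alg: "\<And>q :: 'a poly. degree q > 0 \<Longrightarrow> \<exists>z. poly q z = 0"
    and irr: "irreducible p" and deg: "degree p > 0" and nd: "\<not> p dvd b"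
  shows "finite {(c,a). ev p c a = 0 \<and> ev b c a = 0}"
proof -
  obtain U V d where UV: "U * p + V * b = [:d:]" and d: "d \<noteq> 0"
    using bezout_clear[OF alg irr deg nd] by blast
  have "{(c,a). ev p c a = 0 \<and> ev b c a = 0} \<subseteq>
          Sigma {c. poly d c = 0} (\<lambda>c. {a. poly (map_poly (\<lambda>r. poly r c) p) a = 0})"
  proof (clarsimp)
    fix c a assume h: "ev p c a = 0" "ev b c a = 0"
    have "ev (U * p + V * b) c a = 0" using h by (simp add: ev_add ev_mult)
    hence "poly d c = 0" using UV by (simp add: ev_const)
    moreover have "poly (map_poly (\<lambda>r. poly r c) p) a = 0" using h by (simp add: ev_map_poly)
    ultimately show "poly d c = 0 \<and> poly (map_poly (\<lambda>r. poly r c) p) a = 0" by simp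
  qed
  moreover have "finite (Sigma {c. poly d c = 0} (\<lambda>c. {a. poly (map_poly (\<lambda>r. poly r c) p) a = 0}))"
    using d by (intro finite_SigmaI poly_roots_finite q2_nonzero[OF irr deg]) simp_all
  ultimately show ?thesis by (rule finite_subset)
qed

lemma fps_to_fls_inner:
  fixes c :: "'a::field poly"
  shows "fps_to_fls (poly (map_poly fps_const c) x) = poly (map_poly fls_const c) (fps_to_fls x)"
  by (induction c) (simp_all add: map_poly_pCons fls_times_fps_to_fls)

lemma fps_to_fls_outer:
  fixes q :: "'a::field poly poly"
  shows "fps_to_fls (poly (map_poly (\<lambda>c. poly (map_poly fps_const c) x) q) y)
         = eval2 q (fps_to_fls x) (fps_to_fls y)"
  unfolding eval2_def
  by (induction q) (simp_all add: map_poly_pCons fls_times_fps_to_fls fps_to_fls_inner)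

lemma nth0_inner:
  fixes c :: "'a::field poly"
  shows "poly (map_poly fps_const c) x $ 0 = poly c (x $ 0)"
  by (induction c) (simp_all add: map_poly_pCons)

lemma nth0_outer:
  fixes q :: "'a::field poly poly"
  shows "poly (map_poly (\<lambda>c. poly (map_poly fps_const c) x) q) y $ 0 = ev q (x $ 0) (y $ 0)"
  unfolding ev_def
  by (induction q) (simp_all add: map_poly_pCons nth0_inner)

lemma shift_fps:
  fixes g :: "'a::field fls"
  assumes "0 < fls_subdegree g"
  shows "fls_const s + g = fps_to_fls (fps_const s + fls_regpart g)
         \<and> (fps_const s + fls_regpart g) $ 0 = s"
  using assms by simp

lemma finite_pole_zero:
  fixes p :: "'a::field poly poly"
  assumes pole: "is_pole p r (Some s1, Some s2)" and r: "r = Fract a1 b1" and b1: "b1 \<noteq> 0"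
  shows "ev b1 s1 s2 = 0"
proof (rule ccontr)
  assume nz: "ev b1 s1 s2 \<noteq> 0"
  from pole obtain n a b and phi :: "'a fls" where
    h: "n > 0" "r = Fract a b" "b \<noteq> 0" "pos_deg phi"
       "pos_deg (eval2 a (moebius_inv (Some s1) (puiseux_x n)) (moebius_inv (Some s2) phi) /
                 eval2 b (moebius_inv (Some s1) (puiseux_x n)) (moebius_inv (Some s2) phi))"
    using pole[unfolded is_pole_def Let_def fst_conv snd_conv] by (elim conjE exE) (rule that, assumption+)
  define X' where "X' = fps_const s1 + fls_regpart (inverse (puiseux_x n) :: 'a fls)"
  define Y' where "Y' = fps_const s2 + fls_regpart (inverse phi)"
  have sx: "0 < fls_subdegree (inverse (puiseux_x n) :: 'a fls)"
    using h(1) by (simp add: puiseux_x_def)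
  have sy: "0 < fls_subdegree (inverse phi)"
    using h(4) by (simp add: pos_deg_def)
  have X: "moebius_inv (Some s1) (puiseux_x n) = fps_to_fls X'" "X' $ 0 = s1"
    using shift_fps[OF sx, of s1] unfolding X'_def moebius_inv_def by auto
  have Y: "moebius_inv (Some s2) phi = fps_to_fls Y'" "Y' $ 0 = s2"
    using shift_fps[OF sy, of s2] unfolding Y'_def moebius_inv_def by auto
  define E where "E q = poly (map_poly (\<lambda>c. poly (map_poly fps_const c) X') q) Y'" for q
  have ev2: "eval2 q (moebius_inv (Some s1) (puiseux_x n)) (moebius_inv (Some s2) phi) = fps_to_fls (E q)" for q
    unfolding X Y E_def by (rule fps_to_fls_outer[symmetric])
  have E0: "E q $ 0 = ev q s1 s2" for q
    unfolding E_def nth0_outer X Y ..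
  have "Fract a b = Fract a1 b1" using h(2) r by simp
  hence ab: "a * b1 = a1 * b" using h(3) b1 by (simp add: eq_fract)
  have "eval2 (a * b1) (moebius_inv (Some s1) (puiseux_x n)) (moebius_inv (Some s2) phi)
      = eval2 (a1 * b) (moebius_inv (Some s1) (puiseux_x n)) (moebius_inv (Some s2) phi)"
    by (simp only: ab)
  hence "eval2 a (moebius_inv (Some s1) (puiseux_x n)) (moebius_inv (Some s2) phi) *
         eval2 b1 (moebius_inv (Some s1) (puiseux_x n)) (moebius_inv (Some s2) phi)
       = eval2 a1 (moebius_inv (Some s1) (puiseux_x n)) (moebius_inv (Some s2) phi) *
         eval2 b (moebius_inv (Some s1) (puiseux_x n)) (moebius_inv (Some s2) phi)"
    unfolding eval2_mult .
  hence ev_ab: "fps_to_fls (E a) * fps_to_fls (E b1) = fps_to_fls (E a1) * fps_to_fls (E b)"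
    unfolding ev2 .
  have pd: "pos_deg (fps_to_fls (E a) / fps_to_fls (E b))" using h(5) unfolding ev2 .
  hence "fps_to_fls (E a) / fps_to_fls (E b) \<noteq> 0" unfolding pos_deg_def by (rule conjunct1)
  hence Eb: "fps_to_fls (E b) \<noteq> 0" by (metis division_ring_divide_zero)
  have Eb1_0: "E b1 $ 0 \<noteq> 0" using nz unfolding E0 .
  hence "E b1 \<noteq> 0" by (metis fps_zero_nth)
  hence Eb1: "fps_to_fls (E b1) \<noteq> 0" by (simp only: fps_to_fls_eq_0_iff not_False_eq_True)
  have eqq: "fps_to_fls (E a) / fps_to_fls (E b) = fps_to_fls (E a1) / fps_to_fls (E b1)"
    by (subst frac_eq_eq[OF Eb Eb1]) (rule ev_ab)
  have pd1: "pos_deg (fps_to_fls (E a1) / fps_to_fls (E b1))" using pd eqq by simp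
  hence "fps_to_fls (E a1) / fps_to_fls (E b1) \<noteq> 0" unfolding pos_deg_def by (rule conjunct1)
  hence "fps_to_fls (E a1) \<noteq> 0" by (metis div_0)
  hence "fls_subdegree (fps_to_fls (E a1) / fps_to_fls (E b1))
        = int (subdegree (E a1)) - int (subdegree (E b1))"
    using Eb1 by (simp add: fls_divide_subdegree fls_subdegree_fls_to_fps)
  also have "subdegree (E b1) = 0" using Eb1_0 by simp
  finally have "fls_subdegree (fps_to_fls (E a1) / fps_to_fls (E b1)) \<ge> 0" by simp
  thus False using pd1 by (simp add: pos_deg_def)
qed

lemma poles_finite:
  fixes p :: "'a::field poly poly"
  assumes alg: "\<And>q :: 'a poly. degree q > 0 \<Longrightarrow> \<exists>z. poly q z = 0"
    and irr: "irreducible p" and deg: "degy p > 0" and nk: "\<exists>j. degree (coeff p j) > 0"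
    and r_loc: "r \<in> loc_ring p"
  shows "finite {Q. is_pole p r Q}"
proof -
  obtain a1 b1 where b1: "b1 \<noteq> 0" "\<not> p dvd b1" "r = Fract a1 b1"
    using r_loc unfolding loc_ring_def by blast
  have deg': "degree p > 0" using deg by (simp add: degy_def)
  define A :: "'a pt set" where "A = Pair None ` {y. bihom_eval p (None, y) = 0}"
  define B :: "'a pt set" where "B = (\<lambda>x. (x, None)) ` {x. bihom_eval p (x, None) = 0}"
  define C :: "'a pt set" where "C = (\<lambda>(c,a). (Some c, Some a)) ` {(c,a). ev p c a = 0 \<and> ev b1 c a = 0}"
  have "{Q. is_pole p r Q} \<subseteq> A \<union> B \<union> C"
  proof
    fix Q assume "Q \<in> {Q. is_pole p r Q}"
    hence pole: "is_pole p r Q" by simp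
    hence cur: "bihom_eval p Q = 0" by (simp add: is_pole_def curve_def)
    obtain x y where Q: "Q = (x, y)" by (cases Q)
    show "Q \<in> A \<union> B \<union> C"
    proof (cases x)
      case None thus ?thesis using cur Q unfolding A_def by auto
    next
      case (Some c)
      show ?thesis
      proof (cases y)
        case None thus ?thesis using cur Q unfolding B_def by auto
      next
        case (Some a)
        have "ev p c a = 0" using cur Q \<open>x = Some c\<close> Some by (simp add: bihom_Some_Some)
        moreover have "ev b1 c a = 0"
          using finite_pole_zero[of p r c a a1 b1] pole Q \<open>x = Some c\<close> Some b1 by simp
        ultimately show ?thesis using Q \<open>x = Some c\<close> Some unfolding C_def by auto
      qed
    qed
  qed
  moreover have "finite A" unfolding A_def using fin_fix_fst[OF irr deg' nk] by simp
  moreover have "finite B" unfolding B_def using fin_fix_snd[OF irr nk] by simp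
  moreover have "finite C" unfolding C_def using common_zeros_finite[OF alg irr deg' b1(2)] by simp
  ultimately show ?thesis by (meson finite_Un finite_subset)
qed

theorem proposition10:
  fixes p :: "'a::field_char_0 poly poly"
    and r :: "'a poly poly fract"
    and P :: "'a pt"
  assumes alg_closed: "\<And>q :: 'a poly. degree q > 0 \<Longrightarrow> \<exists>z. poly q z = 0"
    and irr: "irreducible p"
    and not_in_Kx: "degy p > 0"
    and not_in_Ky: "\<exists>j. degree (coeff p j) > 0"
    and Fp: "Fp_trivial p"
    and r_loc: "r \<in> loc_ring p"
    and r_not_ideal: "r \<notin> loc_ideal p"
    and pole: "is_pole p r P"
    and inf: "infinite (orbit p P)"
  shows "\<exists>v :: nat \<Rightarrow> 'a pt. inj v \<and> (\<forall>k. v k \<in> orbit p P) \<and>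
           (\<forall>k. adjacent (v k) (v (Suc k))) \<and>
           is_pole p r (v 0) \<and> (\<forall>k>0. \<not> is_pole p r (v k))"
proof -
  have deg': "degree p > 0" using not_in_Kx by (simp add: degy_def)
  define E where "E = {(Q, R). Q \<in> curve p \<and> R \<in> curve p \<and> adjacent Q R}"
  have "orbit_step p \<subseteq> E\<^sup>=" unfolding orbit_step_def E_def adjacent_def by auto
  hence "(orbit_step p)\<^sup>* \<subseteq> E\<^sup>*" using rtrancl_mono[of "orbit_step p" "E\<^sup>="] by (simp add: rtrancl_reflcl)
  moreover have "E \<subseteq> orbit_step p" unfolding orbit_step_def E_def adjacent_def by auto
  hence "E\<^sup>* \<subseteq> (orbit_step p)\<^sup>*" by (rule rtrancl_mono)
  ultimately have orb: "orbit p P = {Q. (P, Q) \<in> E\<^sup>*}" unfolding orbit_def by blast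
  have fin: "finite {R. (Q, R) \<in> E}" for Q
  proof -
    have "{R. (Q, R) \<in> E} \<subseteq> Pair (fst Q) ` {y. bihom_eval p (fst Q, y) = 0}
            \<union> (\<lambda>x. (x, snd Q)) ` {x. bihom_eval p (x, snd Q) = 0}"
      unfolding E_def adjacent_def curve_def by (auto simp: image_iff)
    moreover have "finite (Pair (fst Q) ` {y. bihom_eval p (fst Q, y) = 0})"
      using fin_fix_fst[OF irr deg' not_in_Ky] by simp
    moreover have "finite ((\<lambda>x. (x, snd Q)) ` {x. bihom_eval p (x, snd Q) = 0})"
      using fin_fix_snd[OF irr not_in_Ky] by simp
    ultimately show ?thesis by (meson finite_Un finite_subset)
  qed
  obtain v where v: "v 0 = P" "inj v" "\<And>k. (v k, v (Suc k)) \<in> E"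
    using koenig[of E P, OF fin] inf orb by auto
  have vorb: "(P, v k) \<in> E\<^sup>*" for k
  proof (induction k)
    case 0 thus ?case using v(1) by simp
  next
    case (Suc k) thus ?case using v(3)[of k] by (rule rtrancl_into_rtrancl)
  qed
  define K where "K = {k. is_pole p r (v k)}"
  have "finite K" unfolding K_def
    using finite_vimageI[OF poles_finite[OF alg_closed irr not_in_Kx not_in_Ky r_loc] v(2)]
    by (simp add: vimage_def)
  moreover have "0 \<in> K" unfolding K_def using v(1) pole by simp
  ultimately have mK: "Max K \<in> K" and mge: "\<And>k. k \<in> K \<Longrightarrow> k \<le> Max K"
    by (auto intro: Max_in)
  define w where "w k = v (Max K + k)" for k
  have "inj w"
  proof (rule injI)
    fix x y assume "w x = w y"
    hence "Max K + x = Max K + y" using v(2) unfolding w_def by (simp add: inj_eq)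
    thus "x = y" by simp
  qed
  moreover have "\<forall>k. w k \<in> orbit p P" unfolding w_def orb using vorb by simp
  moreover have "\<forall>k. adjacent (w k) (w (Suc k))"
    unfolding w_def using v(3) by (auto simp: E_def)
  moreover have "is_pole p r (w 0)" unfolding w_def using mK by (simp add: K_def)
  moreover have "\<forall>k>0. \<not> is_pole p r (w k)"
  proof (intro allI impI notI)
    fix k :: nat assume "k > 0" "is_pole p r (w k)"
    hence "Max K + k \<in> K" unfolding w_def K_def by simp
    hence "Max K + k \<le> Max K" by (rule mge)
    thus False using \<open>k > 0\<close> by simp
  qed
  ultimately show ?thesis by blast
qed

end
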